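(* Let $\mathfrak{g}$ be a real solvable Lie algebra of dimension $2n$ with basis $\{X_1,\dots,X_{4m},\dots,X_{2n}\}$ such that $b_1(\mathfrak{g})=4m$, and let $E$ be a paracomplex structure on $\mathfrak{g}$ with eigenspace decomposition $\mathfrak{g}=\mathfrak{g}_+\oplus\mathfrak{g}_-$. Suppose 1. $X_i\notin D^1\mathfrak{g}=[\mathfrak{g},\mathfrak{g}]$ for $1\le i\le 4m$; 2. $X_i\in\mathfrak{g}_+$ for $1\le i\le 2m$ and $X_i\in\mathfrak{g}_-$ for $2m+1\le i\le 4m$; 3. $b_1(\mathfrak{g}_+)=b_1(\mathfrak{g}_-)=2m$. Then $\mathfrak{g}_+\underline{\times}\mathfrak{g}_-$ admits a paracomplex structure.
   Context: All Lie algebras are finite-dimensional over $\mathbb{R}$; $b_1(\mathfrak{h})=\dim\mathfrak{h}/[\mathfrak{h},\mathfrak{h}]$. A product structure on a Lie algebra $\mathfrak{g}$ is a linear map $E:\mathfrak{g}\to\mathfrak{g}$ with $E^2=\mathrm{id}$, $E\ne\pm\mathrm{id}$, satisfying $E[X,Y]=[E(X),Y]+[X,E(Y)]-E[E(X),E(Y)]$ for all $X,Y$; then the eigenspaces $\mathfrak{g}_+$ (eigenvalue $1$) and $\mathfrak{g}_-$ (eigenvalue $-1$) are subalgebras and $\mathfrak{g}=\mathfrak{g}_+\oplus\mathfrak{g}_-$. A paracomplex structure is a product structure with $\dim\mathfrak{g}_+=\dim\mathfrak{g}_-$. Product by generators: for Lie algebras $\mathfrak{h}_1,\mathfrak{h}_2$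 with $m_i=b_1(\mathfrak{h}_i)$, choose linear forms $\omega_1,\dots,\omega_{m_1}$ on $\mathfrak{h}_1$ vanishing on $[\mathfrak{h}_1,\mathfrak{h}_1]$ and inducing a basis of $(\mathfrak{h}_1/[\mathfrak{h}_1,\mathfrak{h}_1])^*$, similarly $\omega'_1,\dots,\omega'_{m_2}$ for $\mathfrak{h}_2$; $\mathfrak{h}_1\underline{\times}\mathfrak{h}_2$ is the Lie algebra on $\mathfrak{h}_1\oplus\mathfrak{h}_2\oplus\mathbb{R}^{m_1m_2}$ (basis $Z_{ij}$ of the last summand) whose bracket restricts to the given brackets on $\mathfrak{h}_1$ and $\mathfrak{h}_2$, with $Z_{ij}$ central and $[x,y]=\sum_{i,j}\omega_i(x)\omega'_j(y)Z_{ij}$ for $x\in\mathfrak{h}_1$, $y\in\mathfrak{h}_2$. *)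

theory Defs
  imports "HOL-Analysis.Analysis" "HOL-Library.Function_Algebras"
begin

instantiation "fun" :: (type, real_vector) real_vector
begin
definition scaleR_fun :: "real \<Rightarrow> ('a \<Rightarrow> 'b) \<Rightarrow> 'a \<Rightarrow> 'b"
  where "scaleR_fun c f = (\<lambda>x. c *\<^sub>R f x)"
instance by standard (auto simp: scaleR_fun_def fun_eq_iff scaleR_add_right scaleR_add_left)
end

text \<open>A finite-dimensional real Lie algebra: a finite-dimensional subspace V of a
  real vector space together with a bracket which is bilinear, skew-symmetric
  and satisfies the Jacobi identity on V (its values outside V are irrelevant).\<close>
definition lie_algebra :: "'a::real_vector set \<Rightarrow> ('a \<Rightarrow> 'a \<Rightarrow> 'a) \<Rightarrow> bool" where
  "lie_algebra V br \<longleftrightarrow>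
     subspace V \<and> (\<exists>B. finite B \<and> B \<subseteq> V \<and> span B = V) \<and>
     (\<forall>x\<in>V. \<forall>y\<in>V. br x y \<in> V) \<and>
     (\<forall>x\<in>V. \<forall>y\<in>V. \<forall>z\<in>V. \<forall>a b::real.
         br (a *\<^sub>R x + b *\<^sub>R y) z = a *\<^sub>R br x z + b *\<^sub>R br y z) \<and>
     (\<forall>x\<in>V. \<forall>y\<in>V. br x y = - br y x) \<and>
     (\<forall>x\<in>V. \<forall>y\<in>V. \<forall>z\<in>V. br x (br y z) + br y (br z x) + br z (br x y) = 0)"

definition brackets :: "('a::real_vector \<Rightarrow> 'a \<Rightarrow> 'a) \<Rightarrow> 'a set \<Rightarrow> 'a set \<Rightarrow> 'a set" where
  "brackets br A B = span {br x y | x y. x \<in> A \<and> y \<in> B}"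

fun derived_series :: "('a::real_vector \<Rightarrow> 'a \<Rightarrow> 'a) \<Rightarrow> 'a set \<Rightarrow> nat \<Rightarrow> 'a set" where
  "derived_series br V 0 = V"
| "derived_series br V (Suc k) = brackets br (derived_series br V k) (derived_series br V k)"

definition solvable_lie :: "'a::real_vector set \<Rightarrow> ('a \<Rightarrow> 'a \<Rightarrow> 'a) \<Rightarrow> bool" where
  "solvable_lie V br \<longleftrightarrow> lie_algebra V br \<and> (\<exists>k. derived_series br V k = {0})"

definition b1 :: "'a::real_vector set \<Rightarrow> ('a \<Rightarrow> 'a \<Rightarrow> 'a) \<Rightarrow> nat" where
  "b1 V br = dim V - dim (brackets br V V)"

definition plus_eigenspace :: "'a::real_vector set \<Rightarrow> ('a \<Rightarrow> 'a) \<Rightarrow> 'a set" where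
  "plus_eigenspace V E = {x \<in> V. E x = x}"

definition minus_eigenspace :: "'a::real_vector set \<Rightarrow> ('a \<Rightarrow> 'a) \<Rightarrow> 'a set" where
  "minus_eigenspace V E = {x \<in> V. E x = - x}"

definition product_structure :: "'a::real_vector set \<Rightarrow> ('a \<Rightarrow> 'a \<Rightarrow> 'a) \<Rightarrow> ('a \<Rightarrow> 'a) \<Rightarrow> bool" where
  "product_structure V br E \<longleftrightarrow>
     (\<forall>x\<in>V. E x \<in> V) \<and>
     (\<forall>x\<in>V. \<forall>y\<in>V. \<forall>a b::real. E (a *\<^sub>R x + b *\<^sub>R y) = a *\<^sub>R E x + b *\<^sub>R E y) \<and>
     (\<forall>x\<in>V. E (E x) = x) \<and>
     \<not> (\<forall>x\<in>V. E x = x) \<and> \<not> (\<forall>x\<in>V. E x = - x) \<and>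
     (\<forall>x\<in>V. \<forall>y\<in>V. E (br x y) = br (E x) y + br x (E y) - E (br (E x) (E y)))"

definition paracomplex_structure :: "'a::real_vector set \<Rightarrow> ('a \<Rightarrow> 'a \<Rightarrow> 'a) \<Rightarrow> ('a \<Rightarrow> 'a) \<Rightarrow> bool" where
  "paracomplex_structure V br E \<longleftrightarrow>
     product_structure V br E \<and> dim (plus_eigenspace V E) = dim (minus_eigenspace V E)"

text \<open>Admissible generator forms for the product by generators:
  \<omega>_0,...,\<omega>_(b1-1) are linear forms on h vanishing on [h,h] and inducing a basis of
  (h/[h,h])^*, i.e. (the quotient having dimension b1) they are linearly independent.\<close>
definition generator_forms :: "'a::real_vector set \<Rightarrow> ('a \<Rightarrow> 'a \<Rightarrow> 'a) \<Rightarrow> (nat \<Rightarrow> 'a \<Rightarrow> real) \<Rightarrow> bool" where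
  "generator_forms V br \<omega> \<longleftrightarrow>
     (\<forall>i < b1 V br.
        (\<forall>x\<in>V. \<forall>y\<in>V. \<forall>a b::real. \<omega> i (a *\<^sub>R x + b *\<^sub>R y) = a * \<omega> i x + b * \<omega> i y) \<and>
        (\<forall>x\<in>brackets br V V. \<omega> i x = 0)) \<and>
     (\<forall>c::nat \<Rightarrow> real. (\<forall>x\<in>V. (\<Sum>i<b1 V br. c i * \<omega> i x) = 0) \<longrightarrow> (\<forall>i < b1 V br. c i = 0))"

text \<open>Product by generators h1 \<times>_ h2 realised on h1 \<oplus> h2 \<oplus> R^(m1 m2), the last
  summand given by functions z :: nat \<times> nat \<Rightarrow> real supported on {..<m1} \<times> {..<m2}
  (coordinates w.r.t. the basis Z_ij).\<close>
definition gen_prod_carrier :: "'a::real_vector set \<Rightarrow> ('a \<Rightarrow> 'a \<Rightarrow> 'a) \<Rightarrow> 'b::real_vector set \<Rightarrow> ('b \<Rightarrow> 'b \<Rightarrow> 'b)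
     \<Rightarrow> ('a \<times> 'b \<times> (nat \<times> nat \<Rightarrow> real)) set" where
  "gen_prod_carrier V1 br1 V2 br2 =
     {(x, y, z). x \<in> V1 \<and> y \<in> V2 \<and> (\<forall>i j. (b1 V1 br1 \<le> i \<or> b1 V2 br2 \<le> j) \<longrightarrow> z (i, j) = 0)}"

definition gen_prod_bracket :: "'a::real_vector set \<Rightarrow> ('a \<Rightarrow> 'a \<Rightarrow> 'a) \<Rightarrow> (nat \<Rightarrow> 'a \<Rightarrow> real)
     \<Rightarrow> 'b::real_vector set \<Rightarrow> ('b \<Rightarrow> 'b \<Rightarrow> 'b) \<Rightarrow> (nat \<Rightarrow> 'b \<Rightarrow> real)
     \<Rightarrow> ('a \<times> 'b \<times> (nat \<times> nat \<Rightarrow> real)) \<Rightarrow> ('a \<times> 'b \<times> (nat \<times> nat \<Rightarrow> real)) \<Rightarrow> ('a \<times> 'b \<times> (nat \<times> nat \<Rightarrow> real))" where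
  "gen_prod_bracket V1 br1 \<omega>1 V2 br2 \<omega>2 = (\<lambda>(x, y, z) (x', y', z').
     (br1 x x', br2 y y',
      (\<lambda>(i, j). if i < b1 V1 br1 \<and> j < b1 V2 br2
                then \<omega>1 i x * \<omega>2 j y' - \<omega>1 i x' * \<omega>2 j y else 0)))"

end

theory Submission
  imports Defs
begin


lemma basis_Times:
  fixes BA :: "'a::real_vector set" and BB :: "'b::real_vector set"
  assumes iA: "independent BA" and fA: "finite BA" and iB: "independent BB" and fB: "finite BB"
  shows "independent (BA \<times> {0} \<union> {0} \<times> BB)" "finite (BA \<times> {0} \<union> {0} \<times> BB)"
    "span (BA \<times> {0} \<union> {0} \<times> BB) = span BA \<times> span BB"
    "card (BA \<times> {0} \<union> {0} \<times> BB) = card BA + card BB"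
proof -
  show "finite (BA \<times> {0} \<union> {0} \<times> BB)" using fA fB by auto
  show "span (BA \<times> {0} \<union> {0} \<times> BB) = span BA \<times> span BB"
    unfolding span_Un span_Times_sing1 span_Times_sing2
  proof (intro equalityI subsetI)
    fix p assume "p \<in> span BA \<times> span BB"
    then obtain a b where "p = (a,b)" "a \<in> span BA" "b \<in> span BB" by auto
    then show "p \<in> {x + y |x y. x \<in> span BA \<times> {0} \<and> y \<in> {0} \<times> span BB}"
      by (intro CollectI exI[of _ "(a,0)"] exI[of _ "(0,b)"]) auto
  qed auto
  have z: "0 \<notin> BA" "0 \<notin> BB" using iA iB dependent_zero by auto
  have "card (BA \<times> {0} \<union> {0} \<times> BB) = card (BA \<times> {0::'b}) + card ({0::'a} \<times> BB)"
    by (rule card_Un_disjoint) (use fA fB z in auto)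
  then show "card (BA \<times> {0} \<union> {0} \<times> BB) = card BA + card BB"
    by (simp add: card_cartesian_product)
  show "independent (BA \<times> {0} \<union> {0} \<times> BB)"
    unfolding dependent_def
  proof safe
    fix a
    assume a: "a \<in> BA"
    assume "(a, 0) \<in> span (BA \<times> {0} \<union> {0} \<times> BB - {(a, 0)})"
    also have "BA \<times> {0} \<union> {0} \<times> BB - {(a, 0)} = (BA - {a}) \<times> {0} \<union> {0} \<times> BB"
      using z by auto
    finally show False
      using a iA dependent_def
      by (auto simp: span_Un span_Times_sing1 span_Times_sing2)
  next
    fix b
    assume b: "b \<in> BB"
    assume "(0, b) \<in> span (BA \<times> {0} \<union> {0} \<times> BB - {(0, b)})"
    also have "(BA \<times> {0} \<union> {0} \<times> BB - {(0, b)}) = BA \<times> {0} \<union> {0} \<times> (BB - {b})"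
      using z by auto
    finally show False
      using b iB dependent_def
      by (auto simp: span_Un span_Times_sing1 span_Times_sing2)
  qed
qed

definition fdim :: "'a::real_vector set \<Rightarrow> bool" where
  "fdim A \<longleftrightarrow> (\<exists>B. finite B \<and> independent B \<and> span B = A)"

lemma fdim_Times:
  fixes A :: "'a::real_vector set" and B :: "'b::real_vector set"
  assumes "fdim A" "fdim B"
  shows "fdim (A \<times> B)" "dim (A \<times> B) = dim A + dim B"
proof -
  obtain BA where A: "finite BA" "independent BA" "span BA = A" using assms(1) fdim_def by blast
  obtain BB where B: "finite BB" "independent BB" "span BB = B" using assms(2) fdim_def by blast
  note bt = basis_Times[OF A(2,1) B(2,1)]
  show "fdim (A \<times> B)" unfolding fdim_def using bt A B by metis
  have ss: "span (span BA \<times> span BB) = span BA \<times> span BB"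
    by (metis span_eq_iff subspace_Times subspace_span)
  have "dim (A \<times> B) = card (BA \<times> {0} \<union> {0} \<times> BB)"
    by (rule dim_eq_card) (metis bt(1,3) A(3) B(3) ss)+
  also have "\<dots> = dim A + dim B" using bt A B dim_eq_card by (metis dim_span_eq_card_independent)
  finally show "dim (A \<times> B) = dim A + dim B" .
qed

lemma fdim_zero: "fdim {0}" unfolding fdim_def by (rule exI[of _ "{}"]) (auto simp: independent_empty)



lemma sum_fun_apply': "finite S \<Longrightarrow> (sum f S :: 'x \<Rightarrow> 'y::comm_monoid_add) x = (\<Sum>i\<in>S. f i x)"
  by (induction S rule: finite_induct) auto

lemma scaleR_fun_apply[simp]: "(c *\<^sub>R f) x = c *\<^sub>R f x"
  by (simp add: scaleR_fun_def)

definition ZS :: "'p set \<Rightarrow> ('p \<Rightarrow> real) set" where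
  "ZS P = {z. \<forall>q. q \<notin> P \<longrightarrow> z q = 0}"

definition delta :: "'p \<Rightarrow> 'p \<Rightarrow> real" where
  "delta p = (\<lambda>q. if q = p then 1 else 0)"

lemma subspace_ZS: "subspace (ZS P)"
  unfolding subspace_def ZS_def by auto

lemma ZS_basis:
  assumes fP: "finite P"
  shows "independent (delta ` P)" "span (delta ` P) = ZS P" "card (delta ` P) = card P"
    "finite (delta ` P)"
proof -
  have inj: "inj delta" unfolding inj_def delta_def by (metis zero_neq_one)
  show "card (delta ` P) = card P" using inj by (meson card_image inj_on_subset subset_UNIV)
  show "finite (delta ` P)" using fP by simp
  have ev: "(\<Sum>p\<in>P. c p *\<^sub>R delta p) q = (if q \<in> P then c q else 0)" for c q
  proof -
    have "(\<Sum>p\<in>P. c p *\<^sub>R delta p) q = (\<Sum>p\<in>P. c p * delta p q)"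
      using fP by (simp add: sum_fun_apply')
    also have "\<dots> = (\<Sum>p\<in>P. if q = p then c p else 0)"
      by (rule sum.cong) (auto simp: delta_def)
    also have "\<dots> = (if q \<in> P then c q else 0)"
      using fP by (simp add: sum.delta)
    finally show ?thesis .
  qed
  show "independent (delta ` P)"
  proof (rule independent_if_scalars_zero)
    show "finite (delta ` P)" using fP by simp
    fix f x assume s: "(\<Sum>x\<in>delta ` P. f x *\<^sub>R x) = 0" and x: "x \<in> delta ` P"
    then obtain p where p: "p \<in> P" "x = delta p" by auto
    have "(\<Sum>q\<in>P. f (delta q) *\<^sub>R delta q) = 0"
      using s by (simp add: sum.reindex inj_on_subset[OF inj])
    then have "(\<Sum>q\<in>P. f (delta q) *\<^sub>R delta q) p = 0" by simp
    then show "f x = 0" using ev[of "\<lambda>q. f (delta q)" p] p by simp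
  qed
  show "span (delta ` P) = ZS P"
  proof
    show "span (delta ` P) \<subseteq> ZS P"
      by (rule span_minimal[OF _ subspace_ZS]) (auto simp: ZS_def delta_def)
    show "ZS P \<subseteq> span (delta ` P)"
    proof
      fix z assume z: "z \<in> ZS P"
      have "z = (\<Sum>p\<in>P. z p *\<^sub>R delta p)"
        using z ev[of z] by (auto simp: ZS_def fun_eq_iff)
      also have "\<dots> \<in> span (delta ` P)"
        by (intro span_sum span_scale span_base) auto
      finally show "z \<in> span (delta ` P)" .
    qed
  qed
qed

lemma ZS_fdim: "finite P \<Longrightarrow> fdim (ZS P)"
  unfolding fdim_def by (rule exI[of _ "delta ` P"]) (simp add: ZS_basis)

lemma ZS_dim: assumes "finite P" shows "dim (ZS P) = card P"
proof -
  have "dim (ZS P) = card (delta ` P)"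
    by (rule dim_eq_card) (metis ZS_basis(2)[OF assms] span_span, simp add: ZS_basis[OF assms])
  then show ?thesis by (simp add: ZS_basis[OF assms])
qed



lemma neg_self_iff: fixes y :: "'a::real_vector" shows "-y = y \<longleftrightarrow> y = 0"
proof
  assume h: "-y = y"
  have "y + y = 0" by (metis h add.right_inverse)
  then have "(2::real) *\<^sub>R y = 0" by (simp add: scaleR_2)
  then show "y = 0" by simp
qed simp

lemma dim_zero_set: "dim {0::'x::real_vector} = 0"
  using dim_eq_card[of "{}" "{0::'x}"] by (simp add: independent_empty)

lemma main_lemma:
  fixes Vp Vm :: "'a::real_vector set" and br :: "'a \<Rightarrow> 'a \<Rightarrow> 'a"
    and \<omega>1 \<omega>2 :: "nat \<Rightarrow> 'a \<Rightarrow> real" and m :: nat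
  assumes sp: "subspace Vp" and sm: "subspace Vm"
    and fp: "fdim Vp" and fm: "fdim Vm" and dimeq: "dim Vp = dim Vm"
    and nzp: "\<exists>x\<in>Vp. x \<noteq> 0" and nzm: "\<exists>y\<in>Vm. y \<noteq> 0"
    and bp: "b1 Vp br = 2*m" and bm: "b1 Vm br = 2*m"
    and brneg: "\<forall>y\<in>Vm. \<forall>y'\<in>Vm. br (-y) y' = - br y y' \<and> br y (-y') = - br y y'"
    and gneg: "\<forall>j<2*m. \<forall>y\<in>Vm. \<omega>2 j (-y) = - \<omega>2 j y"
  shows "\<exists>F. paracomplex_structure (gen_prod_carrier Vp br Vm br) (gen_prod_bracket Vp br \<omega>1 Vm br \<omega>2) F"
proof -
  define W where "W = gen_prod_carrier Vp br Vm br"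
  define B where "B = gen_prod_bracket Vp br \<omega>1 Vm br \<omega>2"
  define F :: "'a \<times> 'a \<times> (nat \<times> nat \<Rightarrow> real) \<Rightarrow> 'a \<times> 'a \<times> (nat \<times> nat \<Rightarrow> real)"
    where "F = (\<lambda>(x, y, z). (x, -y, \<lambda>p. if fst p < m then z p else - z p))"
  have W: "(x, y, z) \<in> W \<longleftrightarrow> x \<in> Vp \<and> y \<in> Vm \<and> (\<forall>i j. (2*m \<le> i \<or> 2*m \<le> j) \<longrightarrow> z (i, j) = 0)"
    for x y z unfolding W_def gen_prod_carrier_def bp bm by auto
  have Fs: "F (x, y, z) = (x, -y, \<lambda>p. if fst p < m then z p else - z p)" for x y z
    unfolding F_def by simp
  have Bs: "B (x, y, z) (x', y', z') = (br x x', br y y',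
      (\<lambda>(i, j). if i < 2*m \<and> j < 2*m then \<omega>1 i x * \<omega>2 j y' - \<omega>1 i x' * \<omega>2 j y else 0))"
    for x y z x' y' z' unfolding B_def gen_prod_bracket_def bp bm by simp
  have ps: "product_structure W B F"
    unfolding product_structure_def
  proof (intro conjI ballI allI)
    fix w assume "w \<in> W"
    then show "F w \<in> W"
      by (cases w) (auto simp: W Fs subspace_neg[OF sm])
  next
    fix w w' a b assume "w \<in> W" "w' \<in> W"
    show "F (a *\<^sub>R w + b *\<^sub>R w') = a *\<^sub>R F w + b *\<^sub>R F w'"
      by (cases w; cases w') (auto simp: Fs fun_eq_iff algebra_simps)
  next
    fix w assume "w \<in> W"
    show "F (F w) = w" by (cases w) (auto simp: Fs fun_eq_iff)
  next
    obtain y where y: "y \<in> Vm" "y \<noteq> 0" using nzm by blast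
    have "(0, y, 0) \<in> W" using y by (simp add: W subspace_0[OF sp])
    moreover have "F (0, y, 0) \<noteq> (0, y, 0)" using y by (simp add: Fs neg_self_iff)
    ultimately show "\<not> (\<forall>x\<in>W. F x = x)" by blast
  next
    obtain x where x: "x \<in> Vp" "x \<noteq> 0" using nzp by blast
    have "(x, 0, 0) \<in> W" using x by (simp add: W subspace_0[OF sm])
    moreover have "F (x, 0, 0) \<noteq> - (x, 0, 0)" using x by (simp add: Fs) (metis neg_self_iff)
    ultimately show "\<not> (\<forall>x\<in>W. F x = - x)" by blast
  next
    fix w w' assume ww: "w \<in> W" "w' \<in> W"
    obtain x y z where w: "w = (x, y, z)" by (cases w)
    obtain x' y' z' where w': "w' = (x', y', z')" by (cases w')
    have y: "y \<in> Vm" "y' \<in> Vm" using ww by (auto simp: w w' W)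
    have nm: "- y \<in> Vm" "- y' \<in> Vm" using y subspace_neg[OF sm] by auto
    have b1: "br (-y) y' = - br y y'" "br y (-y') = - br y y'" using brneg y by auto
    have b2: "br (-y) (-y') = br y y'" using brneg y nm by auto
    have o1: "\<And>j. j < 2*m \<Longrightarrow> \<omega>2 j (-y) = - \<omega>2 j y" "\<And>j. j < 2*m \<Longrightarrow> \<omega>2 j (-y') = - \<omega>2 j y'"
      using gneg y by auto
    define \<Omega> where "\<Omega> = (\<lambda>a b a' b'. (\<lambda>(i, j). if i < 2*m \<and> j < 2*m then \<omega>1 i a * \<omega>2 j b' - \<omega>1 i a' * \<omega>2 j b else 0) :: nat \<times> nat \<Rightarrow> real)"
    define \<phi> where "\<phi> = (\<lambda>z::nat \<times> nat \<Rightarrow> real. \<lambda>p. if fst p < m then z p else - z p)"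
    have Fs': "F (a, b, c) = (a, -b, \<phi> c)" for a b c unfolding Fs \<phi>_def ..
    have Bs': "B (a, b, c) (a', b', c') = (br a a', br b b', \<Omega> a b a' b')" for a b c a' b' c'
      unfolding Bs \<Omega>_def ..
    have c3: "\<phi> (\<Omega> x y x' y') = \<Omega> x (-y) x' y' + \<Omega> x y x' (-y') - \<phi> (\<Omega> x (-y) x' (-y'))"
    proof (rule ext)
      fix p :: "nat \<times> nat"
      obtain i j where p: "p = (i, j)" by (cases p)
      show "\<phi> (\<Omega> x y x' y') p = (\<Omega> x (-y) x' y' + \<Omega> x y x' (-y') - \<phi> (\<Omega> x (-y) x' (-y'))) p"
      proof (cases "i < 2*m \<and> j < 2*m")
        case True
        then have oj: "\<omega>2 j (-y) = - \<omega>2 j y" "\<omega>2 j (-y') = - \<omega>2 j y'" using o1 by auto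
        show ?thesis unfolding p \<phi>_def \<Omega>_def using True
          by (simp only: fst_conv case_prod_conv if_True oj plus_fun_apply fun_diff_def) (simp add: algebra_simps)
      next
        case False
        then have z: "\<Omega> a b a' b' (i, j) = 0" for a b a' b' unfolding \<Omega>_def using False by auto
        show ?thesis unfolding p \<phi>_def fun_diff_def plus_fun_apply using z by simp
      qed
    qed
    show "F (B w w') = B (F w) w' + B w (F w') - F (B (F w) (F w'))"
      unfolding w w' Fs' Bs' using c3 b1 b2 by simp
  qed
  have plus: "plus_eigenspace W F = Vp \<times> ({0::'a} \<times> ZS ({..<m} \<times> {..<2*m}))"
  proof (intro equalityI subsetI)
    fix w assume "w \<in> plus_eigenspace W F"
    then obtain x y z where w: "w = (x, y, z)" and wW: "(x,y,z) \<in> W" and Fw: "F (x,y,z) = (x,y,z)"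
      unfolding plus_eigenspace_def by (cases w) auto
    have "y = 0" using Fw by (simp add: Fs) (metis neg_self_iff)
    moreover have "z \<in> ZS ({..<m} \<times> {..<2*m})"
      unfolding ZS_def
    proof (intro CollectI allI impI)
      fix q :: "nat \<times> nat" assume q: "q \<notin> {..<m} \<times> {..<2*m}"
      obtain i j where qq: "q = (i, j)" by (cases q)
      show "z q = 0"
      proof (cases "i < m")
        case True then show ?thesis using q wW qq by (auto simp: W)
      next
        case False
        have "\<forall>a b. (if a < m then z (a, b) else - z (a, b)) = z (a, b)"
          using Fw by (simp add: Fs fun_eq_iff)
        then have "- z (i, j) = z (i, j)" using False by (metis (full_types))
        then show ?thesis using qq by simp
      qed
    qed
    ultimately show "w \<in> Vp \<times> ({0::'a} \<times> ZS ({..<m} \<times> {..<2*m}))" using wW w by (auto simp: W)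
  next
    fix w assume "w \<in> Vp \<times> ({0::'a} \<times> ZS ({..<m} \<times> {..<2*m}))"
    then obtain x z where w: "w = (x, 0, z)" and x: "x \<in> Vp" and z: "z \<in> ZS ({..<m} \<times> {..<2*m})"
      by auto
    have "w \<in> W" using x z subspace_0[OF sm] by (auto simp: w W ZS_def)
    moreover have "F w = w" using z by (auto simp: w Fs ZS_def fun_eq_iff)
    ultimately show "w \<in> plus_eigenspace W F" by (simp add: plus_eigenspace_def)
  qed
  have minus: "minus_eigenspace W F = {0::'a} \<times> (Vm \<times> ZS ({m..<2*m} \<times> {..<2*m}))"
  proof (intro equalityI subsetI)
    fix w assume "w \<in> minus_eigenspace W F"
    then obtain x y z where w: "w = (x, y, z)" and wW: "(x,y,z) \<in> W" and Fw: "F (x,y,z) = - (x,y,z)"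
      unfolding minus_eigenspace_def by (cases w) auto
    have "x = 0" using Fw by (simp add: Fs) (metis neg_self_iff)
    moreover have "z \<in> ZS ({m..<2*m} \<times> {..<2*m})"
      unfolding ZS_def
    proof (intro CollectI allI impI)
      fix q :: "nat \<times> nat" assume q: "q \<notin> {m..<2*m} \<times> {..<2*m}"
      obtain i j where qq: "q = (i, j)" by (cases q)
      show "z q = 0"
      proof (cases "i < m")
        case False then show ?thesis using q wW qq by (auto simp: W)
      next
        case True
        have "\<forall>a b. (if a < m then z (a, b) else - z (a, b)) = - z (a, b)"
          using Fw by (simp add: Fs fun_eq_iff)
        then have "z (i, j) = - z (i, j)" using True by (metis (full_types))
        then show ?thesis using qq by simp
      qed
    qed
    ultimately show "w \<in> {0::'a} \<times> (Vm \<times> ZS ({m..<2*m} \<times> {..<2*m}))" using wW w by (auto simp: W)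
  next
    fix w assume "w \<in> {0::'a} \<times> (Vm \<times> ZS ({m..<2*m} \<times> {..<2*m}))"
    then obtain y z where w: "w = (0, y, z)" and y: "y \<in> Vm" and z: "z \<in> ZS ({m..<2*m} \<times> {..<2*m})"
      by auto
    have "w \<in> W" using y z subspace_0[OF sp] by (auto simp: w W ZS_def)
    moreover have "F w = - w" using z by (auto simp: w Fs ZS_def fun_eq_iff)
    ultimately show "w \<in> minus_eigenspace W F" by (simp add: minus_eigenspace_def)
  qed
  have fz1: "fdim (ZS ({..<m} \<times> {..<2*m}))" and fz2: "fdim (ZS ({m..<2*m} \<times> {..<2*m}))"
    by (simp_all add: ZS_fdim)
  have d1: "dim (plus_eigenspace W F) = dim Vp + m * (2*m)"
  proof -
    have a: "fdim ({0::'a} \<times> ZS ({..<m} \<times> {..<2*m}))" using fdim_Times(1)[OF fdim_zero fz1] .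
    have "dim (Vp \<times> ({0::'a} \<times> ZS ({..<m} \<times> {..<2*m}))) = dim Vp + (dim {0::'a} + dim (ZS ({..<m} \<times> {..<2*m})))"
      using fdim_Times(2)[OF fp a] fdim_Times(2)[OF fdim_zero fz1] by simp
    then show ?thesis unfolding plus by (simp add: ZS_dim card_cartesian_product dim_zero_set)
  qed
  have d2: "dim (minus_eigenspace W F) = dim Vm + m * (2*m)"
  proof -
    have a: "fdim (Vm \<times> ZS ({m..<2*m} \<times> {..<2*m}))" using fdim_Times(1)[OF fm fz2] .
    have "dim ({0::'a} \<times> (Vm \<times> ZS ({m..<2*m} \<times> {..<2*m}))) = dim {0::'a} + (dim Vm + dim (ZS ({m..<2*m} \<times> {..<2*m})))"
      using fdim_Times(2)[OF fdim_zero a] fdim_Times(2)[OF fm fz2] by simp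
    then show ?thesis unfolding minus by (simp add: ZS_dim card_cartesian_product dim_zero_set)
  qed
  have "paracomplex_structure W B F"
    unfolding paracomplex_structure_def using ps d1 d2 dimeq by simp
  then show ?thesis unfolding W_def B_def by blast
qed



lemma eig_subspace:
  fixes V :: "'a::real_vector set"
  assumes "subspace V" "\<forall>x\<in>V. \<forall>y\<in>V. \<forall>a b::real. E (a *\<^sub>R x + b *\<^sub>R y) = a *\<^sub>R E x + b *\<^sub>R E y"
  shows "subspace {x\<in>V. E x = c *\<^sub>R x}"
proof -
  have z: "0 \<in> V" using assms(1) subspace_0 by blast
  have E0: "E 0 = 0" using assms(2)[rule_format, OF z z, of 0 0] by simp
  show ?thesis unfolding subspace_def
  proof (intro conjI ballI allI)
    show "0 \<in> {x\<in>V. E x = c *\<^sub>R x}" using z E0 by simp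
  next
    fix x y assume x: "x \<in> {x\<in>V. E x = c *\<^sub>R x}" and y: "y \<in> {x\<in>V. E x = c *\<^sub>R x}"
    have xV: "x \<in> V" and yV: "y \<in> V" using x y by auto
    have "E (1 *\<^sub>R x + 1 *\<^sub>R y) = 1 *\<^sub>R E x + 1 *\<^sub>R E y" by (rule assms(2)[rule_format, OF xV yV])
    then have e: "E (x + y) = c *\<^sub>R (x + y)" using x y by (simp add: scaleR_add_right)
    have "x + y \<in> V" using xV yV assms(1) by (rule_tac subspace_add) auto
    then show "x + y \<in> {x\<in>V. E x = c *\<^sub>R x}" using e by simp
  next
    fix k x assume x: "x \<in> {x\<in>V. E x = c *\<^sub>R x}"
    have xV: "x \<in> V" using x by auto
    have "E (k *\<^sub>R x + 0 *\<^sub>R x) = k *\<^sub>R E x + 0 *\<^sub>R E x" by (rule assms(2)[rule_format, OF xV xV])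
    then have "E (k *\<^sub>R x) = k *\<^sub>R (c *\<^sub>R x)" using x by simp
    also have "\<dots> = c *\<^sub>R (k *\<^sub>R x)" by (simp add: mult.commute)
    finally have e: "E (k *\<^sub>R x) = c *\<^sub>R (k *\<^sub>R x)" .
    have "k *\<^sub>R x \<in> V" using assms(1) xV by (rule subspace_scale)
    then show "k *\<^sub>R x \<in> {x\<in>V. E x = c *\<^sub>R x}" using e by simp
  qed
qed

lemma fdim_sub:
  fixes V S :: "'a::real_vector set"
  assumes "finite T" "span T = V" "S \<subseteq> V" "subspace S"
  shows "fdim S"
proof -
  obtain B where B: "B \<subseteq> S" "independent B" "S \<subseteq> span B"
    using maximal_independent_subset[of S] by blast
  have "finite B" using independent_span_bound[OF assms(1) B(2)] B(1) assms(2,3) by auto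
  moreover have "span B = S"
    using B span_minimal[OF B(1) assms(4)] by auto
  ultimately show ?thesis using B unfolding fdim_def by blast
qed

theorem corollary2:
  fixes V :: "'a::real_vector set" and br :: "'a \<Rightarrow> 'a \<Rightarrow> 'a"
    and E :: "'a \<Rightarrow> 'a" and X :: "nat \<Rightarrow> 'a" and n m :: nat
  assumes solv: "solvable_lie V br"
    and dimV: "dim V = 2 * n"
    and basis: "X ` {1..2*n} \<subseteq> V" "inj_on X {1..2*n}" "independent (X ` {1..2*n})"
               "span (X ` {1..2*n}) = V"
    and m_le: "4 * m \<le> 2 * n"
    and b1g: "b1 V br = 4 * m"
    and para: "paracomplex_structure V br E"
    and h1: "\<forall>i\<in>{1..4*m}. X i \<notin> brackets br V V"
    and h2: "\<forall>i\<in>{1..2*m}. X i \<in> plus_eigenspace V E"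
            "\<forall>i\<in>{2*m+1..4*m}. X i \<in> minus_eigenspace V E"
    and h3: "b1 (plus_eigenspace V E) br = 2 * m" "b1 (minus_eigenspace V E) br = 2 * m"
  shows "\<forall>\<omega>1 \<omega>2. generator_forms (plus_eigenspace V E) br \<omega>1 \<and>
                  generator_forms (minus_eigenspace V E) br \<omega>2 \<longrightarrow>
           (\<exists>F. paracomplex_structure
                  (gen_prod_carrier (plus_eigenspace V E) br (minus_eigenspace V E) br)
                  (gen_prod_bracket (plus_eigenspace V E) br \<omega>1 (minus_eigenspace V E) br \<omega>2) F)"
proof (intro allI impI)
  fix \<omega>1 \<omega>2 assume gf: "generator_forms (plus_eigenspace V E) br \<omega>1 \<and>
                  generator_forms (minus_eigenspace V E) br \<omega>2"
  have lie: "lie_algebra V br" using solv unfolding solvable_lie_def by (rule conjunct1)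
  note L = lie[unfolded lie_algebra_def]
  have sV: "subspace V" using L by (rule conjunct1)
  have bil: "\<forall>x\<in>V. \<forall>y\<in>V. \<forall>z\<in>V. \<forall>a b::real. br (a *\<^sub>R x + b *\<^sub>R y) z = a *\<^sub>R br x z + b *\<^sub>R br y z"
    using L[THEN conjunct2, THEN conjunct2, THEN conjunct2] by (rule conjunct1)
  have skew: "\<forall>x\<in>V. \<forall>y\<in>V. br x y = - br y x"
    using L[THEN conjunct2, THEN conjunct2, THEN conjunct2, THEN conjunct2] by (rule conjunct1)
  have ps: "product_structure V br E" using para unfolding paracomplex_structure_def by (rule conjunct1)
  have deq: "dim (plus_eigenspace V E) = dim (minus_eigenspace V E)"
    using para unfolding paracomplex_structure_def by (rule conjunct2)
  note P = ps[unfolded product_structure_def]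
  have EV: "\<forall>x\<in>V. E x \<in> V" using P by (rule conjunct1)
  have lin: "\<forall>x\<in>V. \<forall>y\<in>V. \<forall>a b::real. E (a *\<^sub>R x + b *\<^sub>R y) = a *\<^sub>R E x + b *\<^sub>R E y"
    using P[THEN conjunct2] by (rule conjunct1)
  have inv: "\<forall>x\<in>V. E (E x) = x" using P[THEN conjunct2, THEN conjunct2] by (rule conjunct1)
  have np: "\<not> (\<forall>x\<in>V. E x = x)" using P[THEN conjunct2, THEN conjunct2, THEN conjunct2] by (rule conjunct1)
  have nm: "\<not> (\<forall>x\<in>V. E x = - x)"
    using P[THEN conjunct2, THEN conjunct2, THEN conjunct2, THEN conjunct2] by (rule conjunct1)
  have pe: "plus_eigenspace V E = {x\<in>V. E x = 1 *\<^sub>R x}" by (simp add: plus_eigenspace_def)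
  have me: "minus_eigenspace V E = {x\<in>V. E x = (-1) *\<^sub>R x}" by (simp add: minus_eigenspace_def)
  have sp: "subspace (plus_eigenspace V E)" unfolding pe by (rule eig_subspace[OF sV lin])
  have sm: "subspace (minus_eigenspace V E)" unfolding me by (rule eig_subspace[OF sV lin])
  have subp: "plus_eigenspace V E \<subseteq> V" and subm: "minus_eigenspace V E \<subseteq> V"
    by (auto simp: plus_eigenspace_def minus_eigenspace_def)
  have fp: "fdim (plus_eigenspace V E)" by (rule fdim_sub[OF _ basis(4) subp sp]) simp
  have fm: "fdim (minus_eigenspace V E)" by (rule fdim_sub[OF _ basis(4) subm sm]) simp
  have nzp: "\<exists>x\<in>plus_eigenspace V E. x \<noteq> 0"
  proof -
    obtain v where v: "v \<in> V" "E v \<noteq> - v" using nm by blast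
    have Ev: "E v \<in> V" using EV v(1) by simp
    have u: "v + E v \<in> V" by (rule subspace_add[OF sV v(1) Ev])
    have "E (1 *\<^sub>R v + 1 *\<^sub>R E v) = 1 *\<^sub>R E v + 1 *\<^sub>R E (E v)" by (rule lin[rule_format, OF v(1) Ev])
    then have "E (v + E v) = v + E v" using inv v by (simp add: add.commute)
    moreover have "v + E v \<noteq> 0"
    proof
      assume "v + E v = 0"
      then have "E v + v = 0" by (simp add: add.commute)
      then have "E v = - v" by (simp add: eq_neg_iff_add_eq_0)
      then show False using v by simp
    qed
    ultimately show ?thesis using u by (auto simp: plus_eigenspace_def)
  qed
  have nzm: "\<exists>y\<in>minus_eigenspace V E. y \<noteq> 0"
  proof -
    obtain v where v: "v \<in> V" "E v \<noteq> v" using np by blast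
    have Ev: "E v \<in> V" using EV v(1) by simp
    have u: "v - E v \<in> V" by (rule subspace_diff[OF sV v(1) Ev])
    have "E (1 *\<^sub>R v + (-1) *\<^sub>R E v) = 1 *\<^sub>R E v + (-1) *\<^sub>R E (E v)" by (rule lin[rule_format, OF v(1) Ev])
    then have "E (v - E v) = - (v - E v)" using inv v by simp
    moreover have "v - E v \<noteq> 0" using v by simp
    ultimately show ?thesis using u by (auto simp: minus_eigenspace_def)
  qed
  have brneg: "\<forall>y\<in>minus_eigenspace V E. \<forall>y'\<in>minus_eigenspace V E.
      br (-y) y' = - br y y' \<and> br y (-y') = - br y y'"
  proof (intro ballI conjI)
    fix y y' assume "y \<in> minus_eigenspace V E" "y' \<in> minus_eigenspace V E"
    then have y: "y \<in> V" "y' \<in> V" using subm by auto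
    have ny: "-y \<in> V" "-y' \<in> V" by (rule subspace_neg[OF sV y(1)], rule subspace_neg[OF sV y(2)])
    have "br ((-1) *\<^sub>R y + 0 *\<^sub>R y) y' = (-1) *\<^sub>R br y y' + 0 *\<^sub>R br y y'"
      by (rule bil[rule_format, OF y(1) y(1) y(2)])
    then show a: "br (-y) y' = - br y y'" by simp
    have "br ((-1) *\<^sub>R y' + 0 *\<^sub>R y') y = (-1) *\<^sub>R br y' y + 0 *\<^sub>R br y' y"
      by (rule bil[rule_format, OF y(2) y(2) y(1)])
    then have "br (-y') y = - br y' y" by simp
    then have r: "br (-y') y = - br y' y" .
    have "br y (-y') = - br (-y') y" by (rule skew[rule_format, OF y(1) ny(2)])
    also have "\<dots> = br y' y" using r by simp
    also have "\<dots> = - br y y'" by (rule skew[rule_format, OF y(2) y(1)])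
    finally show "br y (-y') = - br y y'" .
  qed
  have gneg: "\<forall>j<2*m. \<forall>y\<in>minus_eigenspace V E. \<omega>2 j (-y) = - \<omega>2 j y"
  proof (intro allI impI ballI)
    fix j y assume j: "j < 2*m" and y: "y \<in> minus_eigenspace V E"
    have "\<omega>2 j ((-1) *\<^sub>R y + 0 *\<^sub>R y) = (-1) * \<omega>2 j y + 0 * \<omega>2 j y"
    proof -
      have G: "\<forall>i < b1 (minus_eigenspace V E) br.
        (\<forall>x\<in>minus_eigenspace V E. \<forall>y\<in>minus_eigenspace V E. \<forall>a b::real. \<omega>2 i (a *\<^sub>R x + b *\<^sub>R y) = a * \<omega>2 i x + b * \<omega>2 i y) \<and>
        (\<forall>x\<in>brackets br (minus_eigenspace V E) (minus_eigenspace V E). \<omega>2 i x = 0)"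
        using gf[THEN conjunct2, unfolded generator_forms_def] by (rule conjunct1)
      have "\<forall>x\<in>minus_eigenspace V E. \<forall>y\<in>minus_eigenspace V E. \<forall>a b::real. \<omega>2 j (a *\<^sub>R x + b *\<^sub>R y) = a * \<omega>2 j x + b * \<omega>2 j y"
        using G j h3(2) by simp
      from this[rule_format, OF y y] show ?thesis .
    qed
    then show "\<omega>2 j (-y) = - \<omega>2 j y" by simp
  qed
  show "\<exists>F. paracomplex_structure
                  (gen_prod_carrier (plus_eigenspace V E) br (minus_eigenspace V E) br)
                  (gen_prod_bracket (plus_eigenspace V E) br \<omega>1 (minus_eigenspace V E) br \<omega>2) F"
    by (rule main_lemma[OF sp sm fp fm deq nzp nzm h3(1,2) brneg gneg])
qed


end
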